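(* Let $A$ be a finite set, let $P$ be a probability measure on $(A^{\mathbb{Z}},\mathfrak{A}^{\mathbb{Z}})$ (not necessarily stationary), and let $h\ge 0$. Then $P$ satisfies condition (B) with respect to $h$ if and only if $P$ satisfies condition (B* ) with respect to $h$.
   Context: $\mathfrak{A}^{\mathbb{Z}}$ is the $\sigma$-field on $A^{\mathbb{Z}}$ generated by cylinder sets. For $n\ge 1$, $A^{(n)}:=\prod_{i=1}^n A$ and $P^{(n)}$ denotes the marginal of $P$ on the coordinates $1,\dots,n$, i.e. $P^{(n)}(\mathbf{x})=P(\{\xi: (\xi_i)_{i=1}^n=\mathbf{x}\})$ for $\mathbf{x}\in A^{(n)}$. For a finite sequence $\mathbf{x}=(x_i)_{i=1}^n$ ($n\ge2$) let $\mathbf{x}_\flat:=(x_i)_{i=1}^{n-1}$, and for a set $C\subseteq A^{(n+1)}$ let $C_\flat:=\{\mathbf{x}_\flat:\mathbf{x}\in C\}$. Condition (B) w.r.t. $h$: for $P$-almost every $(\xi_n)_{n\in\mathbb{Z}}\in A^{\mathbb{Z}}$ the limit $\lim_{n\to\infty}-\frac1n\log P^{(n)}((\xi_i)_{i=1}^n)$ exists and equals $h$. Condition (B* ) w.r.t. $h$: for every $\varepsilon>0$ there exist subsets $C_\varepsilon^{(n)}\subseteq A^{(n)}$, $n\in\mathbb{N}$, and a number $N(\varepsilon)$ such that (1) $C_\varepsilon^{(n)}=(C_\varepsilon^{(n+1)})_\flat$ for all $n\ge1$; (2) $\#C_\varepsilon^{(n)}\in(e^{n(h-\varepsilon)},e^{n(h+\varepsilon)})$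 for $n\ge N(\varepsilon)$; (3) $P^{(n)}(\mathbf{x})<e^{-n(h-\varepsilon)}$ for all $n\ge N(\varepsilon)$ and all $\mathbf{x}\in C_\varepsilon^{(n)}$; (4) $P^{(n)}(C_\varepsilon^{(n)})>1-\varepsilon$ for all $n\ge 1$. *)

theory Defs
  imports "HOL-Probability.Probability"
begin

text \<open>Points of A^Z are functions int => 'a, where the finite alphabet A is the
  finite type 'a. A finite sequence in A^(n) is a list of length n.\<close>

definition word :: "(int \<Rightarrow> 'a) \<Rightarrow> nat \<Rightarrow> 'a list" where
  "word \<xi> n = map \<xi> [1..int n]"

definition marg :: "(int \<Rightarrow> 'a) measure \<Rightarrow> nat \<Rightarrow> 'a list \<Rightarrow> real" where
  "marg P n x = measure P {\<xi> \<in> space P. word \<xi> n = x}"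

definition marg_set :: "(int \<Rightarrow> 'a) measure \<Rightarrow> nat \<Rightarrow> 'a list set \<Rightarrow> real" where
  "marg_set P n C = measure P {\<xi> \<in> space P. word \<xi> n \<in> C}"

definition cond_B :: "(int \<Rightarrow> 'a) measure \<Rightarrow> real \<Rightarrow> bool" where
  "cond_B P h \<longleftrightarrow>
     (AE \<xi> in P. ((\<lambda>n. - (1 / real n) * ln (marg P n (word \<xi> n))) \<longlongrightarrow> h) sequentially)"

definition cond_Bstar :: "(int \<Rightarrow> 'a) measure \<Rightarrow> real \<Rightarrow> bool" where
  "cond_Bstar P h \<longleftrightarrow>
     (\<forall>\<epsilon>>0. \<exists>(C :: nat \<Rightarrow> 'a list set) (N :: nat).
        (\<forall>n\<ge>1. C n \<subseteq> {x. length x = n}) \<and>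
        (\<forall>n\<ge>1. C n = butlast ` C (Suc n)) \<and>
        (\<forall>n\<ge>N. n \<ge> 1 \<longrightarrow>
            exp (real n * (h - \<epsilon>)) < real (card (C n)) \<and>
            real (card (C n)) < exp (real n * (h + \<epsilon>))) \<and>
        (\<forall>n\<ge>N. n \<ge> 1 \<longrightarrow> (\<forall>x\<in>C n. marg P n x < exp (- (real n * (h - \<epsilon>))))) \<and>
        (\<forall>n\<ge>1. marg_set P n (C n) > 1 - \<epsilon>))"

end

theory Submission
  imports Defs
begin


lemma map_meas:
  "(\<lambda>\<xi>. map \<xi> l) \<in> measurable (PiM UNIV (\<lambda>_::int. count_space (UNIV :: 'a::countable set))) (count_space UNIV)"
proof (induction l)
  case Nil
  then show ?case by simp
next
  case (Cons i l)
  have f: "(\<lambda>\<xi>. c # map \<xi> l) \<in> measurable (PiM UNIV (\<lambda>_::int. count_space (UNIV :: 'a set))) (count_space UNIV)" for c :: 'a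
    using measurable_compose[OF Cons, of "\<lambda>ys. c # ys" "count_space UNIV"] by (simp add: comp_def)
  have g: "(\<lambda>\<xi>. \<xi> i) \<in> measurable (PiM UNIV (\<lambda>_::int. count_space (UNIV :: 'a set))) (count_space UNIV)"
    by (rule measurable_component_singleton) simp
  show ?case using measurable_compose_countable[where f="\<lambda>c \<xi>. c # map \<xi> l", OF f g] by simp
qed

locale setting =
  fixes P :: "(int \<Rightarrow> 'a::finite) measure"
  assumes ps: "prob_space P"
    and sP: "sets P = sets (PiM UNIV (\<lambda>_::int. count_space (UNIV :: 'a set)))"
begin

interpretation prob_space P by (rule ps)

lemma space_P: "space P = UNIV"
  using sets_eq_imp_space_eq[OF sP] by (simp add: space_PiM)

lemma word_meas: "(\<lambda>\<xi>. word \<xi> n) \<in> measurable P (count_space UNIV)"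
  unfolding word_def using map_meas measurable_cong_sets[OF sP refl] by blast

lemma word_sets: "{\<xi>. Q (word \<xi> n)} \<in> sets P"
proof -
  have "(\<lambda>\<xi>. word \<xi> n) -` {x. Q x} \<inter> space P \<in> sets P"
    by (rule measurable_sets[OF word_meas]) simp
  then show ?thesis by (simp add: space_P vimage_def)
qed

lemma length_word[simp]: "length (word \<xi> n) = n"
  by (simp add: word_def)

lemma butlast_word: "butlast (word \<xi> (Suc n)) = word \<xi> n"
proof -
  have "[1..1 + int n] = [1..int n] @ [int n + 1]"
    using upto_rec2[of 1 "1 + int n"] by simp
  then show ?thesis by (simp add: word_def add.commute)
qed

lemma finite_len: "finite {x :: 'a list. length x = n}"
  using finite_lists_length_eq[of "UNIV :: 'a set" n] by simp

lemma marg_set_sum: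
  assumes "C \<subseteq> {x. length x = n}"
  shows "marg_set P n C = (\<Sum>x\<in>C. marg P n x)"
proof -
  have fin: "finite C" using finite_subset[OF assms finite_len] .
  have "{\<xi> \<in> space P. word \<xi> n \<in> C} = (\<Union>x\<in>C. {\<xi>. word \<xi> n = x})"
    by (auto simp: space_P)
  moreover have "measure P (\<Union>x\<in>C. {\<xi>. word \<xi> n = x}) = (\<Sum>x\<in>C. measure P {\<xi>. word \<xi> n = x})"
    by (rule finite_measure_finite_Union[OF fin]) (auto simp: word_sets[of "\<lambda>y. y = _"] disjoint_family_on_def)
  ultimately show ?thesis by (simp add: marg_set_def marg_def space_P)
qed

lemma marg_nonneg: "marg P n x \<ge> 0"
  by (simp add: marg_def)

lemma AE_pos: "AE \<xi> in P. \<forall>n. marg P n (word \<xi> n) > 0"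
proof -
  have "AE \<xi> in P. word \<xi> n \<noteq> x" if "marg P n x = 0" for n x
  proof -
    have "{\<xi>. word \<xi> n = x} \<in> null_sets P"
      using that word_sets[of "\<lambda>y. y = x" n]
      by (simp add: marg_def space_P emeasure_eq_measure null_sets_def)
    then show ?thesis using AE_not_in by fastforce
  qed
  then have "AE \<xi> in P. \<forall>n x. marg P n x = 0 \<longrightarrow> word \<xi> n \<noteq> x"
    by (subst AE_all_countable, intro allI, subst AE_all_countable, auto)
  then show ?thesis
    by eventually_elim (metis marg_nonneg order_le_less)
qed

end


lemma (in prob_space) AE_approx:
  assumes "\<And>e. e > 0 \<Longrightarrow> \<exists>S\<in>sets M. prob S \<ge> 1 - e \<and> (AE x in M. x \<in> S \<longrightarrow> Q x)"
  shows "AE x in M. Q x"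
proof -
  have "\<forall>j::nat. \<exists>S. S\<in>sets M \<and> prob S \<ge> 1 - 1 / real (Suc j) \<and> (AE x in M. x \<in> S \<longrightarrow> Q x)"
    using assms by (metis of_nat_0_less_iff zero_less_Suc zero_less_divide_1_iff)
  then obtain S where S: "\<And>j. S j \<in> sets M" "\<And>j. prob (S j) \<ge> 1 - 1 / real (Suc j)"
      "\<And>j. AE x in M. x \<in> S j \<longrightarrow> Q x"
    by metis
  define U where "U = (\<Union>j. S j)"
  have U: "U \<in> sets M" using S(1) by (auto simp: U_def)
  have ge: "prob U \<ge> 1 - 1 / real (Suc j)" for j
  proof -
    have "S j \<subseteq> U" by (auto simp: U_def)
    then show ?thesis using finite_measure_mono[of "S j" U] S(2)[of j] U by linarith
  qed
  have "prob U = 1"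
  proof (rule ccontr)
    assume "prob U \<noteq> 1"
    then have "0 < 1 - prob U" using prob_le_1[of U] by linarith
    then obtain j where "inverse (real (Suc j)) < 1 - prob U"
      using reals_Archimedean by blast
    with ge[of j] show False by (simp add: field_simps)
  qed
  then have "AE x in M. x \<in> U" using prob_eq_1[OF U] by simp
  moreover have "AE x in M. \<forall>j. x \<in> S j \<longrightarrow> Q x"
    unfolding AE_all_countable using S(3) by blast
  ultimately show ?thesis by eventually_elim (auto simp: U_def)
qed

lemma f_bounds:
  fixes p a b :: real and n :: nat
  assumes "n > 0" "p > 0" "exp (-(real n * b)) \<le> p" "p < exp (-(real n * a))"
  shows "a < -(1 / real n) * ln p \<and> -(1 / real n) * ln p \<le> b"
proof -
  have 1: "ln p < -(real n * a)" using assms by (metis ln_exp ln_less_cancel_iff exp_gt_zero)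
  have 2: "-(real n * b) \<le> ln p" using assms by (metis ln_exp ln_le_cancel_iff exp_gt_zero)
  have n: "real n > 0" using assms by simp
  from 1 2 n show ?thesis by (simp add: field_simps)
qed

lemma f_bounds2:
  fixes p d h :: real and n :: nat
  assumes "n > 0" "p > 0" "\<bar>-(1 / real n) * ln p - h\<bar> < d"
  shows "exp (-(real n * (h + d))) < p \<and> p < exp (-(real n * (h - d)))"
proof -
  have n: "real n > 0" using assms by simp
  have "-(real n * (h + d)) < ln p \<and> ln p < -(real n * (h - d))"
    using assms(3) n by (simp add: abs_less_iff field_simps)
  then show ?thesis using assms(2)
    by (metis exp_less_cancel_iff exp_ln)
qed

lemma card_up:
  fixes c a b :: real
  assumes "c * exp (-a) < 1" "a \<le> b"
  shows "c < exp b"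
proof -
  have "c < exp a" using assms(1) by (simp add: exp_minus field_simps)
  also have "\<dots> \<le> exp b" using assms(2) by simp
  finally show ?thesis .
qed

lemma card_low:
  fixes c e d h \<epsilon> :: real and n :: nat
  assumes "1 - e < c * exp (-(real n * (h - d)))" "e \<le> 1/2" "d = e/2" "real n * d \<ge> 1" "e \<le> \<epsilon>"
    and "c \<ge> 0"
  shows "exp (real n * (h - \<epsilon>)) < c"
proof -
  define E where "E = exp (real n * (h - d))"
  have Epos: "E > 0" by (simp add: E_def)
  have "1/2 < c * exp (-(real n * (h - d)))" using assms by linarith
  moreover have "c * exp (-(real n * (h - d))) = c / E"
    by (simp add: exp_minus divide_inverse E_def)
  ultimately have "1/2 < c / E" by simp
  then have c1: "E / 2 < c"
    using Epos by (simp add: less_divide_eq)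
  have "E = exp (real n * (h - e)) * exp (real n * d)"
    unfolding E_def using assms(3) by (simp add: exp_add[symmetric] algebra_simps)
  moreover have "exp (real n * d) \<ge> 2" using exp_ge_add_one_self[of "real n * d"] assms(4) by linarith
  ultimately have c2: "exp (real n * (h - e)) \<le> E / 2"
    using exp_gt_zero[of "real n * (h - e)"] by (simp add: mult_left_mono)
  have c3: "exp (real n * (h - \<epsilon>)) \<le> exp (real n * (h - e))"
    using assms(5) by (simp add: mult_left_mono)
  from c1 c2 c3 show ?thesis by linarith
qed



context setting begin

interpretation prob_space P by (rule ps)

lemma Bstar_step:
  assumes Bs: "cond_Bstar P h" and \<delta>: "\<delta> > 0"
  shows "AE \<xi> in P. eventually (\<lambda>n. \<bar>-(1 / real n) * ln (marg P n (word \<xi> n)) - h\<bar> < \<delta>) sequentially"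
proof (rule AE_approx)
  fix e :: real assume e: "e > 0"
  define \<epsilon> where "\<epsilon> = min e (\<delta>/3)"
  have \<epsilon>: "\<epsilon> > 0" "\<epsilon> \<le> e" "\<epsilon> \<le> \<delta>/3" using e \<delta> by (auto simp: \<epsilon>_def)
  obtain C :: "nat \<Rightarrow> 'a list set" and N :: nat where
    CC1: "\<forall>n\<ge>1. C n \<subseteq> {x. length x = n}" and
    CC2: "\<forall>n\<ge>1. C n = butlast ` C (Suc n)" and
    CC3: "\<forall>n\<ge>N. n \<ge> 1 \<longrightarrow>
            exp (real n * (h - \<epsilon>)) < real (card (C n)) \<and>
            real (card (C n)) < exp (real n * (h + \<epsilon>))" and
    CC4: "\<forall>n\<ge>N. n \<ge> 1 \<longrightarrow> (\<forall>x\<in>C n. marg P n x < exp (- (real n * (h - \<epsilon>))))" and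
    CC5: "\<forall>n\<ge>1. marg_set P n (C n) > 1 - \<epsilon>"
    using mp[OF spec[OF Bs[unfolded cond_Bstar_def], of \<epsilon>] \<epsilon>(1)] by (elim exE conjE) (rule that)
  have C1: "\<And>n. n\<ge>1 \<Longrightarrow> C n \<subseteq> {x. length x = n}" using CC1 by blast
  have C2: "\<And>n. n\<ge>1 \<Longrightarrow> C n = butlast ` C (Suc n)" using CC2 by blast
  have C3: "\<And>n. n\<ge>N \<Longrightarrow> n \<ge> 1 \<Longrightarrow> real (card (C n)) < exp (real n * (h + \<epsilon>))"
    using CC3 by blast
  have C4: "\<And>n x. n\<ge>N \<Longrightarrow> n \<ge> 1 \<Longrightarrow> x \<in> C n \<Longrightarrow> marg P n x < exp (- (real n * (h - \<epsilon>)))"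
    using CC4 by blast
  have C5: "\<And>n. n\<ge>1 \<Longrightarrow> marg_set P n (C n) > 1 - \<epsilon>" using CC5 by blast
  define E where "E k = {\<xi>. word \<xi> (Suc k) \<in> C (Suc k)}" for k
  define D where "D = (\<Inter>k. E k)"
  have E: "E k \<in> sets P" for k unfolding E_def by (rule word_sets)
  have D: "D \<in> sets P" unfolding D_def using E by auto
  have "decseq E"
  proof (rule decseq_SucI)
    fix k
    show "E (Suc k) \<subseteq> E k"
    proof
      fix \<xi> assume "\<xi> \<in> E (Suc k)"
      then have "butlast (word \<xi> (Suc (Suc k))) \<in> butlast ` C (Suc (Suc k))" by (auto simp: E_def)
      then show "\<xi> \<in> E k" using C2[of "Suc k"] by (simp add: butlast_word E_def)
    qed
  qed
  then have lim: "(\<lambda>k. prob (E k)) \<longlonglongrightarrow> prob D"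
    unfolding D_def using E by (intro finite_Lim_measure_decseq) auto
  have "prob (E k) > 1 - \<epsilon>" for k
    using C5[of "Suc k"] by (simp add: marg_set_def E_def space_P)
  then have "1 - \<epsilon> \<le> prob D"
    using lim by (intro LIMSEQ_le_const[OF lim]) (auto intro: less_imp_le)
  then have probD: "prob D \<ge> 1 - e" using \<epsilon> by linarith
  define N' where "N' = max N 1"
  define B where "B n = (if n \<ge> N' then {x\<in>C n. marg P n x < exp (-(real n * (h + 2*\<epsilon>)))} else {})" for n
  define A where "A n = {\<xi>. word \<xi> n \<in> B n}" for n
  have A: "A n \<in> sets P" for n unfolding A_def by (rule word_sets)
  have Abound: "prob (A n) \<le> exp (-\<epsilon>) ^ n" for n
  proof (cases "n \<ge> N'")
    case False
    then show ?thesis by (simp add: A_def B_def)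
  next
    case True
    then have n1: "n \<ge> 1" "n \<ge> N" by (auto simp: N'_def)
    have BC: "B n \<subseteq> C n" using True by (auto simp: B_def)
    have fin: "finite (C n)" using finite_subset[OF C1[OF n1(1)] finite_len] .
    have "prob (A n) = marg_set P n (B n)" by (simp add: A_def marg_set_def space_P)
    also have "\<dots> = (\<Sum>x\<in>B n. marg P n x)"
      using BC C1[OF n1(1)] by (intro marg_set_sum) auto
    also have "\<dots> \<le> (\<Sum>x\<in>B n. exp (-(real n * (h + 2*\<epsilon>))))"
      using True by (intro sum_mono) (auto simp: B_def)
    also have "\<dots> = real (card (B n)) * exp (-(real n * (h + 2*\<epsilon>)))" by simp
    also have "\<dots> \<le> real (card (C n)) * exp (-(real n * (h + 2*\<epsilon>)))"
      using card_mono[OF fin BC] by (intro mult_right_mono) auto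
    also have "\<dots> \<le> exp (real n * (h + \<epsilon>)) * exp (-(real n * (h + 2*\<epsilon>)))"
      using C3[OF n1(2) n1(1)] by (intro mult_right_mono) auto
    also have "\<dots> = exp (real n * (-\<epsilon>))"
      by (simp add: exp_add[symmetric] algebra_simps)
    also have "\<dots> = exp (-\<epsilon>) ^ n" by (subst exp_of_nat_mult[symmetric]) simp
    finally show ?thesis .
  qed
  have "summable (\<lambda>n. exp (-\<epsilon>) ^ n)" using \<epsilon>(1) by (intro summable_geometric) simp
  then have "summable (\<lambda>n. measure P (A n))"
    by (rule summable_comparison_test'[where N=0]) (use Abound in auto)
  then have BCae: "AE \<xi> in P. eventually (\<lambda>n. \<xi> \<in> space P - A n) sequentially"
    using A by (intro borel_cantelli_AE1) (auto simp: emeasure_eq_measure)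
  show "\<exists>S\<in>sets P. prob S \<ge> 1 - e \<and> (AE \<xi> in P. \<xi> \<in> S \<longrightarrow>
      eventually (\<lambda>n. \<bar>-(1 / real n) * ln (marg P n (word \<xi> n)) - h\<bar> < \<delta>) sequentially)"
  proof (intro bexI conjI)
    show "prob D \<ge> 1 - e" by (rule probD)
    show "D \<in> sets P" by (rule D)
    show "AE \<xi> in P. \<xi> \<in> D \<longrightarrow>
      eventually (\<lambda>n. \<bar>-(1 / real n) * ln (marg P n (word \<xi> n)) - h\<bar> < \<delta>) sequentially"
      using BCae AE_pos
    proof eventually_elim
      case (elim \<xi>)
      show ?case
      proof
        assume "\<xi> \<in> D"
        then have inC: "word \<xi> n \<in> C n" if "n \<ge> 1" for n
          using that by (cases n) (auto simp: D_def E_def)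
        have "eventually (\<lambda>n. n \<ge> N') sequentially" by (rule eventually_ge_at_top)
        with elim(1) show "eventually (\<lambda>n. \<bar>-(1 / real n) * ln (marg P n (word \<xi> n)) - h\<bar> < \<delta>) sequentially"
        proof eventually_elim
          case (elim n)
          then have n1: "n \<ge> 1" "n \<ge> N" by (auto simp: N'_def)
          have notB: "word \<xi> n \<notin> B n" using elim by (auto simp: A_def space_P)
          have up: "marg P n (word \<xi> n) < exp (-(real n * (h - \<epsilon>)))"
            using C4[OF n1(2) n1(1) inC[OF n1(1)]] .
          have lo: "exp (-(real n * (h + 2*\<epsilon>))) \<le> marg P n (word \<xi> n)"
            using notB inC[OF n1(1)] elim by (auto simp: B_def not_less)
          have "h - \<epsilon> < -(1 / real n) * ln (marg P n (word \<xi> n)) \<and>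
                -(1 / real n) * ln (marg P n (word \<xi> n)) \<le> h + 2*\<epsilon>"
            using f_bounds[OF _ _ lo up] n1 \<open>\<forall>n. marg P n (word \<xi> n) > 0\<close> by auto
          then show ?case using \<epsilon> by (auto simp: abs_less_iff)
        qed
      qed
    qed
  qed
qed

lemma Bstar_B:
  assumes Bs: "cond_Bstar P h"
  shows "cond_B P h"
proof -
  have "AE \<xi> in P. \<forall>k::nat. eventually (\<lambda>n. \<bar>-(1 / real n) * ln (marg P n (word \<xi> n)) - h\<bar> < inverse (real (Suc k))) sequentially"
    unfolding AE_all_countable by (intro allI Bstar_step[OF Bs]) simp
  then show ?thesis unfolding cond_B_def
  proof eventually_elim
    case (elim \<xi>)
    show ?case
    proof (rule tendstoI)
      fix r :: real assume "r > 0"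
      then obtain k where k: "inverse (real (Suc k)) < r" using reals_Archimedean by blast
      show "eventually (\<lambda>n. dist (-(1 / real n) * ln (marg P n (word \<xi> n))) h < r) sequentially"
        using elim[rule_format, of k] by eventually_elim (use k in \<open>auto simp: dist_real_def\<close>)
    qed
  qed
qed

end


context setting begin

interpretation prob_space P by (rule ps)

lemma B_Bstar:
  assumes B: "cond_B P h"
  shows "cond_Bstar P h"
  unfolding cond_Bstar_def
proof (intro allI impI)
  fix \<epsilon> :: real assume \<epsilon>: "\<epsilon> > 0"
  define e where "e = min \<epsilon> (1/2)"
  define d where "d = e / 2"
  have e: "e > 0" "e \<le> \<epsilon>" "e \<le> 1/2" using \<epsilon> by (auto simp: e_def)
  have d: "d > 0" "d \<le> \<epsilon>" using e by (auto simp: d_def)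
  define f where "f n \<xi> = -(1 / real n) * ln (marg P n (word \<xi> n))" for n \<xi>
  define G where "G N = {\<xi>. \<forall>n. (n \<ge> N \<longrightarrow> \<bar>f n \<xi> - h\<bar> < d) \<and> marg P n (word \<xi> n) > 0}" for N
  have Gsets: "G N \<in> sets P" for N
  proof -
    have "G N = (\<Inter>n. {\<xi>. (\<lambda>x. (n \<ge> N \<longrightarrow> \<bar>-(1 / real n) * ln (marg P n x) - h\<bar> < d) \<and> marg P n x > 0) (word \<xi> n)})"
      by (auto simp: G_def f_def)
    also have "\<dots> \<in> sets P" using word_sets by auto
    finally show ?thesis .
  qed
  have inc: "incseq G" by (auto simp: incseq_def G_def)
  have "AE \<xi> in P. \<xi> \<in> (\<Union>N. G N)"
    using B AE_pos unfolding cond_B_def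
  proof eventually_elim
    case (elim \<xi>)
    then have "eventually (\<lambda>n. dist (f n \<xi>) h < d) sequentially"
      using d(1) by (auto simp: f_def tendsto_iff)
    then obtain N where "\<forall>n\<ge>N. \<bar>f n \<xi> - h\<bar> < d" by (auto simp: eventually_sequentially dist_real_def)
    with elim show ?case by (auto simp: G_def)
  qed
  then have "prob (\<Union>N. G N) = 1" using Gsets by (subst prob_eq_1) auto
  moreover have "(\<lambda>N. prob (G N)) \<longlonglongrightarrow> prob (\<Union>N. G N)"
    using Gsets inc by (intro finite_Lim_measure_incseq) auto
  ultimately have "eventually (\<lambda>N. prob (G N) > 1 - e) sequentially"
    using e by (intro order_tendstoD(1)) auto
  then obtain N0 where N0: "prob (G N0) > 1 - e" by (auto simp: eventually_sequentially)
  define C where "C n = (\<lambda>\<xi>. word \<xi> n) ` G N0" for n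
  define N where "N = max N0 (max 1 (nat \<lceil>1/d\<rceil>))"
  have Gne: "G N0 \<noteq> {}" using N0 e by auto
  have Clen: "C n \<subseteq> {x. length x = n}" for n by (auto simp: C_def)
  have Cfin: "finite (C n)" for n using finite_subset[OF Clen finite_len] .
  have Cne: "C n \<noteq> {}" for n using Gne by (auto simp: C_def)
  have Cprob: "marg_set P n (C n) > 1 - e" for n
  proof -
    have "G N0 \<subseteq> {\<xi> \<in> space P. word \<xi> n \<in> C n}" by (auto simp: C_def space_P)
    then have "prob (G N0) \<le> marg_set P n (C n)"
      unfolding marg_set_def using word_sets[of "\<lambda>x. x \<in> C n" n]
      by (intro finite_measure_mono) (auto simp: space_P)
    with N0 show ?thesis by linarith
  qed
  have Cbd: "exp (-(real n * (h + d))) < marg P n x \<and> marg P n x < exp (-(real n * (h - d)))"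
    if nN: "n \<ge> N" "x \<in> C n" for n x
  proof -
    obtain \<xi> where \<xi>: "\<xi> \<in> G N0" "x = word \<xi> n" using nN(2) by (auto simp: C_def)
    have n: "n > 0" "n \<ge> N0" using nN(1) by (auto simp: N_def)
    then show ?thesis using \<xi> f_bounds2[OF n(1), of "marg P n x" h d] by (auto simp: G_def f_def)
  qed
  show "\<exists>(C :: nat \<Rightarrow> 'a list set) N.
        (\<forall>n\<ge>1. C n \<subseteq> {x. length x = n}) \<and>
        (\<forall>n\<ge>1. C n = butlast ` C (Suc n)) \<and>
        (\<forall>n\<ge>N. n \<ge> 1 \<longrightarrow>
            exp (real n * (h - \<epsilon>)) < real (card (C n)) \<and>
            real (card (C n)) < exp (real n * (h + \<epsilon>))) \<and>
        (\<forall>n\<ge>N. n \<ge> 1 \<longrightarrow> (\<forall>x\<in>C n. marg P n x < exp (- (real n * (h - \<epsilon>))))) \<and>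
        (\<forall>n\<ge>1. marg_set P n (C n) > 1 - \<epsilon>)"
  proof (intro exI[of _ C] exI[of _ N] conjI allI impI ballI)
    fix n :: nat
    show "C n \<subseteq> {x. length x = n}" by (rule Clen)
    show "C n = butlast ` C (Suc n)" by (simp add: C_def image_image butlast_word)
    show "marg_set P n (C n) > 1 - \<epsilon>" using Cprob[of n] e by linarith
  next
    fix n x assume n: "n \<ge> N" "x \<in> C n"
    have "exp (-(real n * (h - d))) \<le> exp (-(real n * (h - \<epsilon>)))"
      using d by (simp add: mult_left_mono)
    then show "marg P n x < exp (- (real n * (h - \<epsilon>)))" using Cbd[OF n] by linarith
  next
    fix n assume n: "n \<ge> N" "n \<ge> 1"
    have sum_eq: "marg_set P n (C n) = (\<Sum>x\<in>C n. marg P n x)" by (rule marg_set_sum[OF Clen])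
    have "(\<Sum>x\<in>C n. exp (-(real n * (h + d)))) < (\<Sum>x\<in>C n. marg P n x)"
      using Cbd[OF n(1)] Cfin Cne by (intro sum_strict_mono) auto
    moreover have "marg_set P n (C n) \<le> 1" by (simp add: marg_set_def)
    ultimately have "real (card (C n)) * exp (-(real n * (h + d))) < 1" using sum_eq by simp
    then show "real (card (C n)) < exp (real n * (h + \<epsilon>))"
      by (rule card_up) (use d in \<open>simp add: mult_left_mono\<close>)
    have "(\<Sum>x\<in>C n. marg P n x) < (\<Sum>x\<in>C n. exp (-(real n * (h - d))))"
      using Cbd[OF n(1)] Cfin Cne by (intro sum_strict_mono) auto
    then have "1 - e < real (card (C n)) * exp (-(real n * (h - d)))"
      using Cprob[of n] sum_eq by simp
    moreover have "real n * d \<ge> 1"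
    proof -
      have "real n \<ge> 1/d" using n(1) unfolding N_def by linarith
      then show ?thesis using d(1) by (simp add: field_simps)
    qed
    ultimately show "exp (real n * (h - \<epsilon>)) < real (card (C n))"
      using e by (intro card_low[where e=e and d=d]) (auto simp: d_def)
  qed
qed

end

theorem lemma2p1:
  fixes P :: "(int \<Rightarrow> 'a::finite) measure" and h :: real
  assumes "prob_space P"
    and "sets P = sets (PiM UNIV (\<lambda>_::int. count_space (UNIV :: 'a set)))"
    and "h \<ge> 0"
  shows "cond_B P h \<longleftrightarrow> cond_Bstar P h"
proof -
  interpret setting P using assms(1,2) by (rule setting.intro)
  show ?thesis using B_Bstar Bstar_B by blast
qed

end
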